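(* In the setting described in the context, assume $f$ is strongly convex with respect to the norm $\|\cdot\|_{LP^{-1}}$ with convexity parameter $\mu>0$. Choose an initial point $x_0$, target accuracy $0<\epsilon<f(x_0)-f^*$, confidence $0<\rho<1$, and $$k\geq\frac1\mu\log\frac{f(x_0)-f^*}{\epsilon\rho}.$$ If $x_k$ is the random point generated by RCDS$(p,x_0)$ applied to $f$, then $\mathbf{P}(f(x_k)-f^*\leq\epsilon)\geq1-\rho$.
   Context: Let $U\in\mathbf{R}^{N\times N}$ be a column permutation of the $N\times N$ identity matrix, partitioned as $U=[U_1,\dots,U_n]$ with $U_i\in\mathbf{R}^{N\times N_i}$, $\sum_iN_i=N$; for $x\in\mathbf{R}^N$ write $x^{(i)}=U_i^Tx$. Each $\mathbf{R}^{N_i}$ carries an arbitrary norm $\|\cdot\|_{(i)}$ with dual norm $\|s\|_{(i)}^*=\max_{\|t\|_{(i)}=1}\langle s,t\rangle$. Let $f:\mathbf{R}^N\to\mathbf{R}$ be convex and differentiable with $\|\nabla_if(x+U_it)-\nabla_if(x)\|_{(i)}^*\leq L_i\|t\|_{(i)}$ for all $x,t,i$, where $L_i>0$ and $\nabla_if(x)=U_i^T\nabla f(x)$; $f$ attains its minimum $f^*$. Let $p$ be a probability vector with all $p_i>0$, $L=\mathrm{Diag}(L_i)$, $P=\mathrm{Diag}(p_i)$, and $\|x\|_{LP^{-1}}=(\sum_i\frac{L_i}{p_i}\|x^{(i)}\|_{(i)}^2)^{1/2}$. Strong convexity w.r.t. $\|\cdot\|_{LP^{-1}}$ with parameter $\mu$: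 $f(x)\geq f(y)+\langle\nabla f(y),x-y\rangle+\frac\mu2\|x-y\|_{LP^{-1}}^2$ for all $x,y$. For $s\in\mathbf{R}^{N_i}$, $s^\#$ denotes an optimal solution of $\min_{t}\{-\langle s,t\rangle+\frac12\|t\|_{(i)}^2\}$. Algorithm RCDS$(p,x_0)$: for $k=0,1,2,\dots$, choose $i$ with probability $p_i$ (independently) and set $x_{k+1}=x_k-\frac1{L_i}U_i(\nabla_if(x_k))^\#$. *)

theory Defs
  imports "HOL-Analysis.Analysis" "HOL-Probability.Probability_Mass_Function"
begin

text \<open>Coordinates of R^N are indexed by the finite type 'n; the blocks of the
 column permutation U = [U_1,...,U_n] are the sets B i (i in the finite type 'm),
 forming a partition of the coordinates. The subspace R^{N_i} is identified with
 the vectors supported on B i, and U_i U_i^T x is the block projection blk B i x.\<close>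

definition blkspace :: "('m \<Rightarrow> 'n set) \<Rightarrow> 'm \<Rightarrow> (real^'n) set" where
  "blkspace B i = {t. \<forall>j. j \<notin> B i \<longrightarrow> t $ j = 0}"

definition blk :: "('m \<Rightarrow> 'n set) \<Rightarrow> 'm \<Rightarrow> real^'n \<Rightarrow> real^'n" where
  "blk B i x = (\<chi> j. if j \<in> B i then x $ j else 0)"

definition is_block_partition :: "('m \<Rightarrow> 'n set) \<Rightarrow> bool" where
  "is_block_partition B \<longleftrightarrow>
     (\<forall>i. B i \<noteq> {}) \<and> (\<forall>i i'. i \<noteq> i' \<longrightarrow> B i \<inter> B i' = {}) \<and> (\<Union>i. B i) = UNIV"

definition is_block_norm :: "('m \<Rightarrow> 'n set) \<Rightarrow> 'm \<Rightarrow> (real^'n \<Rightarrow> real) \<Rightarrow> bool" where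
  "is_block_norm B i nm \<longleftrightarrow>
     (\<forall>t\<in>blkspace B i. 0 \<le> nm t \<and> (nm t = 0 \<longleftrightarrow> t = 0)) \<and>
     (\<forall>t\<in>blkspace B i. \<forall>c::real. nm (c *\<^sub>R t) = \<bar>c\<bar> * nm t) \<and>
     (\<forall>s\<in>blkspace B i. \<forall>t\<in>blkspace B i. nm (s + t) \<le> nm s + nm t)"

definition dual_norm :: "('m \<Rightarrow> 'n set) \<Rightarrow> 'm \<Rightarrow> (real^'n \<Rightarrow> real) \<Rightarrow> real^'n \<Rightarrow> real" where
  "dual_norm B i nm s = Sup {s \<bullet> t | t. t \<in> blkspace B i \<and> nm t = 1}"

definition LP_norm :: "('m::finite \<Rightarrow> 'n set) \<Rightarrow> ('m \<Rightarrow> real^'n \<Rightarrow> real) \<Rightarrow> ('m \<Rightarrow> real)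
    \<Rightarrow> 'm pmf \<Rightarrow> real^'n \<Rightarrow> real" where
  "LP_norm B nm L p x = sqrt (\<Sum>i\<in>UNIV. L i / pmf p i * (nm i (blk B i x))\<^sup>2)"

text \<open>t is an optimal solution of min_t { -<s,t> + 1/2 ||t||^2 } over block i,
  i.e. t is an admissible value of s^#.\<close>
definition is_sharp :: "('m \<Rightarrow> 'n set) \<Rightarrow> 'm \<Rightarrow> (real^'n \<Rightarrow> real) \<Rightarrow> real^'n \<Rightarrow> real^'n \<Rightarrow> bool" where
  "is_sharp B i nm s t \<longleftrightarrow> t \<in> blkspace B i \<and>
     (\<forall>u\<in>blkspace B i. - (s \<bullet> t) + 1/2 * (nm t)\<^sup>2 \<le> - (s \<bullet> u) + 1/2 * (nm u)\<^sup>2)"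

definition rcds_step :: "('m \<Rightarrow> 'n set) \<Rightarrow> ('m \<Rightarrow> real) \<Rightarrow> ('m \<Rightarrow> real^'n \<Rightarrow> real^'n)
    \<Rightarrow> (real^'n \<Rightarrow> real^'n) \<Rightarrow> 'm \<Rightarrow> real^'n \<Rightarrow> real^'n" where
  "rcds_step B L sh g i x = x - (1 / L i) *\<^sub>R sh i (blk B i (g x))"

fun rcds :: "('m \<Rightarrow> 'n set) \<Rightarrow> ('m \<Rightarrow> real) \<Rightarrow> ('m \<Rightarrow> real^'n \<Rightarrow> real^'n)
    \<Rightarrow> (real^'n \<Rightarrow> real^'n) \<Rightarrow> 'm pmf \<Rightarrow> real^'n \<Rightarrow> nat \<Rightarrow> (real^'n) pmf" where
  "rcds B L sh g p x0 0 = return_pmf x0"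
| "rcds B L sh g p x0 (Suc k) =
     bind_pmf (rcds B L sh g p x0 k) (\<lambda>x. map_pmf (\<lambda>i. rcds_step B L sh g i x) p)"

end

theory Submission
  imports Defs
begin


lemma blkspace_scale: "t \<in> blkspace B i \<Longrightarrow> c *\<^sub>R t \<in> blkspace B i"
  by (simp add: blkspace_def)
lemma blkspace_add: "s \<in> blkspace B i \<Longrightarrow> t \<in> blkspace B i \<Longrightarrow> s + t \<in> blkspace B i"
  by (simp add: blkspace_def)
lemma blkspace_diff: "s \<in> blkspace B i \<Longrightarrow> t \<in> blkspace B i \<Longrightarrow> s - t \<in> blkspace B i"
  by (simp add: blkspace_def)
lemma blkspace_minus: "t \<in> blkspace B i \<Longrightarrow> - t \<in> blkspace B i"
  by (simp add: blkspace_def)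
lemma blkspace_zero: "0 \<in> blkspace B i"
  by (simp add: blkspace_def)
lemma blk_in: "blk B i x \<in> blkspace B i"
  by (simp add: blkspace_def blk_def)
lemma blk_inner: "v \<in> blkspace B i \<Longrightarrow> blk B i y \<bullet> v = y \<bullet> v"
  unfolding inner_vec_def blk_def blkspace_def
  by (intro sum.cong) auto
lemma blk_scale: "blk B i (c *\<^sub>R x) = c *\<^sub>R blk B i x"
  by (simp add: blk_def vec_eq_iff)
lemma blk_diff: "blk B i (x - y) = blk B i x - blk B i y"
  by (simp add: blk_def vec_eq_iff)

lemma sum_blk:
  fixes B :: "'m::finite \<Rightarrow> 'n::finite set"
  assumes "is_block_partition B"
  shows "(\<Sum>i\<in>UNIV. blk B i x) = x"
proof (rule vec_eq_iff[THEN iffD2], rule allI)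
  fix j
  from assms obtain i0 where i0: "j \<in> B i0" unfolding is_block_partition_def by blast
  have iff: "\<And>i. j \<in> B i \<longleftrightarrow> i = i0"
    using assms i0 unfolding is_block_partition_def by blast
  have "(\<Sum>i\<in>UNIV. blk B i x) $ j = (\<Sum>i\<in>UNIV. (blk B i x) $ j)" by simp
  also have "\<dots> = (\<Sum>i\<in>UNIV. if i = i0 then x $ j else 0)"
    by (intro sum.cong) (auto simp: blk_def iff)
  also have "\<dots> = x $ j" by simp
  finally show "(\<Sum>i\<in>UNIV. blk B i x) $ j = x $ j" .
qed

context
  fixes B :: "'m \<Rightarrow> 'n::finite set" and i and nm
  assumes bn: "is_block_norm B i nm"
begin

lemma nm_scale: "t \<in> blkspace B i \<Longrightarrow> nm (c *\<^sub>R t) = \<bar>c\<bar> * nm t"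
  using bn unfolding is_block_norm_def by blast
lemma nm_nonneg: "t \<in> blkspace B i \<Longrightarrow> 0 \<le> nm t"
  using bn unfolding is_block_norm_def by blast
lemma nm_zero_iff: "t \<in> blkspace B i \<Longrightarrow> nm t = 0 \<longleftrightarrow> t = 0"
  using bn unfolding is_block_norm_def by blast
lemma nm_triangle: "s \<in> blkspace B i \<Longrightarrow> t \<in> blkspace B i \<Longrightarrow> nm (s + t) \<le> nm s + nm t"
  using bn unfolding is_block_norm_def by blast
lemma nm0: "nm 0 = 0"
  using nm_zero_iff[OF blkspace_zero] by simp
lemma nm_minus: "t \<in> blkspace B i \<Longrightarrow> nm (- t) = nm t"
  using nm_scale[of t "-1"] by simp

lemma nm_sum_le:
  assumes "finite S" "S \<subseteq> B i"
  shows "nm (\<Sum>j\<in>S. c j *\<^sub>R axis j 1) \<le> (\<Sum>j\<in>S. \<bar>c j\<bar> * nm (axis j 1))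
     \<and> (\<Sum>j\<in>S. c j *\<^sub>R axis j 1) \<in> blkspace B i"
  using assms
proof (induction S rule: finite_induct)
  case empty
  then show ?case by (simp add: nm0 blkspace_zero)
next
  case (insert a F)
  have ax: "axis a 1 \<in> blkspace B i" using insert.prems
    by (auto simp: blkspace_def axis_def)
  have ca: "c a *\<^sub>R axis a 1 \<in> blkspace B i" by (rule blkspace_scale[OF ax])
  from insert have IH: "nm (\<Sum>j\<in>F. c j *\<^sub>R axis j 1) \<le> (\<Sum>j\<in>F. \<bar>c j\<bar> * nm (axis j 1))"
     and IHb: "(\<Sum>j\<in>F. c j *\<^sub>R axis j 1) \<in> blkspace B i" by auto
  have "nm (\<Sum>j\<in>insert a F. c j *\<^sub>R axis j 1) = nm (c a *\<^sub>R axis a 1 + (\<Sum>j\<in>F. c j *\<^sub>R axis j 1))"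
    using insert by simp
  also have "\<dots> \<le> nm (c a *\<^sub>R axis a 1) + nm (\<Sum>j\<in>F. c j *\<^sub>R axis j 1)"
    by (rule nm_triangle[OF ca IHb])
  also have "\<dots> \<le> \<bar>c a\<bar> * nm (axis a 1) + (\<Sum>j\<in>F. \<bar>c j\<bar> * nm (axis j 1))"
    using IH nm_scale[OF ax] by simp
  finally show ?case using insert blkspace_add[OF ca IHb] by simp
qed

lemma nm_upper: "\<exists>K\<ge>0. \<forall>t\<in>blkspace B i. nm t \<le> K * norm t"
proof -
  define K where "K = (\<Sum>j\<in>B i. nm (axis j 1))"
  have axb: "\<And>j. j \<in> B i \<Longrightarrow> axis j 1 \<in> blkspace B i"
    by (auto simp: blkspace_def axis_def)
  have K0: "K \<ge> 0" unfolding K_def by (intro sum_nonneg nm_nonneg axb)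
  have "nm t \<le> K * norm t" if t: "t \<in> blkspace B i" for t
  proof -
    have teq: "t = (\<Sum>j\<in>B i. (t $ j) *\<^sub>R axis j 1)"
    proof (rule vec_eq_iff[THEN iffD2], rule allI)
      fix k
      have "(\<Sum>j\<in>B i. (t $ j) *\<^sub>R axis j (1::real)) $ k = (\<Sum>j\<in>B i. if j = k then t $ k else 0)"
        unfolding sum_component by (intro sum.cong) (auto simp: axis_def)
      also have "\<dots> = t $ k" using t by (auto simp: blkspace_def)
      finally show "t $ k = (\<Sum>j\<in>B i. (t $ j) *\<^sub>R axis j 1) $ k" by simp
    qed
    have "nm t \<le> (\<Sum>j\<in>B i. \<bar>t $ j\<bar> * nm (axis j 1))"
      using nm_sum_le[of "B i" "\<lambda>j. t $ j"] teq by simp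
    also have "\<dots> \<le> (\<Sum>j\<in>B i. norm t * nm (axis j 1))"
      by (intro sum_mono mult_right_mono nm_nonneg axb)
         (auto simp: component_le_norm_cart)
    also have "\<dots> = K * norm t" by (simp add: K_def sum_distrib_left mult.commute)
    finally show ?thesis .
  qed
  with K0 show ?thesis by blast
qed

lemma nm_lower: "\<exists>m>0. \<forall>t\<in>blkspace B i. m * norm t \<le> nm t"
proof -
  obtain K where K: "K \<ge> 0" "\<And>t. t \<in> blkspace B i \<Longrightarrow> nm t \<le> K * norm t"
    using nm_upper by blast
  define S where "S = blkspace B i \<inter> sphere 0 1"
  have cl: "closed (blkspace B i)"
  proof -
    have "blkspace B i = (\<Inter>j\<in>-B i. {t. t $ j = 0})" by (auto simp: blkspace_def)
    moreover have "closed (\<Inter>j\<in>-B i. {t::real^'n. t $ j = 0})"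
      by (intro closed_INT ballI closed_Collect_eq continuous_intros)
    ultimately show ?thesis by simp
  qed
  have cS: "compact S" unfolding S_def
    using compact_Int_closed[OF compact_sphere cl] by (simp add: Int_commute)
  have lip: "\<bar>nm s - nm t\<bar> \<le> K * norm (s - t)" if "s \<in> blkspace B i" "t \<in> blkspace B i" for s t
  proof -
    have d1: "s - t \<in> blkspace B i" "t - s \<in> blkspace B i" using that by (auto intro: blkspace_diff)
    have "nm s \<le> nm (s - t) + nm t" using nm_triangle[OF d1(1) that(2)] by simp
    moreover have "nm t \<le> nm (t - s) + nm s" using nm_triangle[OF d1(2) that(1)] by simp
    moreover have "nm (t - s) = nm (s - t)" using nm_minus[OF d1(1)] by simp
    moreover have "nm (s - t) \<le> K * norm (s - t)" using K(2)[OF d1(1)] .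
    ultimately show ?thesis by linarith
  qed
  have cont: "continuous_on S nm"
    unfolding continuous_on_iff
  proof (intro ballI allI impI)
    fix x :: "real^'n" and e :: real assume x: "x \<in> S" and e: "e > 0"
    show "\<exists>d>0. \<forall>x'\<in>S. dist x' x < d \<longrightarrow> dist (nm x') (nm x) < e"
    proof (intro exI[of _ "e / (K + 1)"] conjI ballI impI)
      show "e / (K + 1) > 0" using e K by simp
      fix y assume y: "y \<in> S" and d: "dist y x < e / (K + 1)"
      have "dist (nm y) (nm x) \<le> K * norm (y - x)" using lip[of y x] x y by (simp add: S_def dist_real_def)
      also have "\<dots> \<le> (K + 1) * norm (y - x)" by (simp add: distrib_right)
      also have "\<dots> < (K + 1) * (e / (K + 1))" using d K by (intro mult_strict_left_mono) (auto simp: dist_norm)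
      also have "\<dots> = e" using K by simp
      finally show "dist (nm y) (nm x) < e" .
    qed
  qed
  show ?thesis
  proof (cases "S = {}")
    case True
    have "\<forall>t\<in>blkspace B i. 1 * norm t \<le> nm t"
    proof
      fix t assume t: "t \<in> blkspace B i"
      have "t = 0"
      proof (rule ccontr)
        assume "t \<noteq> 0"
        then have "(1 / norm t) *\<^sub>R t \<in> S" using t by (auto simp: S_def intro: blkspace_scale)
        with True show False by simp
      qed
      then show "1 * norm t \<le> nm t" by (simp add: nm0)
    qed
    then show ?thesis by (intro exI[of _ 1]) simp
  next
    case False
    obtain x where x: "x \<in> S" and xm: "\<And>y. y \<in> S \<Longrightarrow> nm x \<le> nm y"
      using continuous_attains_inf[OF cS False cont] by blast
    have xb: "x \<in> blkspace B i" and xn: "norm x = 1" using x by (auto simp: S_def)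
    have mpos: "nm x > 0" using nm_nonneg[OF xb] nm_zero_iff[OF xb] xn by fastforce
    have "nm x * norm t \<le> nm t" if t: "t \<in> blkspace B i" for t
    proof (cases "t = 0")
      case True then show ?thesis by (simp add: nm0)
    next
      case False
      then have "(1 / norm t) *\<^sub>R t \<in> S" using t by (auto simp: S_def intro: blkspace_scale)
      then have "nm x \<le> nm ((1 / norm t) *\<^sub>R t)" by (rule xm)
      also have "\<dots> = nm t / norm t" using nm_scale[OF t] by simp
      finally show ?thesis using False by (simp add: field_simps)
    qed
    with mpos show ?thesis by blast
  qed
qed

lemma dual_bound:
  assumes v: "v \<in> blkspace B i"
  shows "a \<bullet> v \<le> dual_norm B i nm a * nm v"
proof (cases "v = 0")
  case True then show ?thesis by (simp add: nm0)
next
  case False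
  obtain m where m: "m > 0" "\<And>t. t \<in> blkspace B i \<Longrightarrow> m * norm t \<le> nm t"
    using nm_lower by blast
  have bdd: "bdd_above {a \<bullet> t | t. t \<in> blkspace B i \<and> nm t = 1}"
  proof (rule bdd_aboveI)
    fix y assume "y \<in> {a \<bullet> t | t. t \<in> blkspace B i \<and> nm t = 1}"
    then obtain t where t: "t \<in> blkspace B i" "nm t = 1" "y = a \<bullet> t" by blast
    have "norm t \<le> 1 / m" using m(2)[OF t(1)] t(2) m(1) by (simp add: field_simps)
    have "y \<le> norm a * norm t" using t(3) by (simp add: norm_cauchy_schwarz)
    also have "\<dots> \<le> norm a * (1 / m)" using \<open>norm t \<le> 1 / m\<close> by (intro mult_left_mono) auto
    finally show "y \<le> norm a / m" by simp
  qed
  have np: "nm v > 0" using nm_nonneg[OF v] nm_zero_iff[OF v] False by fastforce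
  define w where "w = (1 / nm v) *\<^sub>R v"
  have wb: "w \<in> blkspace B i" unfolding w_def by (rule blkspace_scale[OF v])
  have w1: "nm w = 1" unfolding w_def using nm_scale[OF v] np by simp
  have "a \<bullet> w \<le> dual_norm B i nm a"
    unfolding dual_norm_def by (rule cSup_upper[OF _ bdd]) (use wb w1 in blast)
  moreover have "a \<bullet> v = (a \<bullet> w) * nm v" using np by (simp add: w_def)
  ultimately show ?thesis using np by (simp add: mult_right_mono)
qed

end


lemma descent:
  fixes B :: "'m \<Rightarrow> 'n::finite set" and f :: "real^'n \<Rightarrow> real"
  assumes bn: "is_block_norm B i nm"
    and grad: "\<And>x. (f has_derivative (\<lambda>h. g x \<bullet> h)) (at x)"
    and Lp: "L > 0"
    and lip: "\<And>x t. t \<in> blkspace B i \<Longrightarrow> dual_norm B i nm (blk B i (g (x + t)) - blk B i (g x)) \<le> L * nm t"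
    and v: "v \<in> blkspace B i"
  shows "f (x + v) \<le> f x + g x \<bullet> v + L / 2 * (nm v)\<^sup>2"
proof -
  define \<phi> where "\<phi> \<tau> = f (x + \<tau> *\<^sub>R v) - \<tau> * (g x \<bullet> v) - L / 2 * \<tau>\<^sup>2 * (nm v)\<^sup>2" for \<tau>
  have der: "(\<phi> has_real_derivative (g (x + \<tau> *\<^sub>R v) \<bullet> v - g x \<bullet> v - L * \<tau> * (nm v)\<^sup>2)) (at \<tau>)" for \<tau>
  proof -
    have l: "((\<lambda>\<tau>. x + \<tau> *\<^sub>R v) has_derivative (\<lambda>h. h *\<^sub>R v)) (at \<tau>)"
      by (auto intro!: derivative_eq_intros)
    have "((\<lambda>\<tau>. f (x + \<tau> *\<^sub>R v)) has_derivative (\<lambda>h. g (x + \<tau> *\<^sub>R v) \<bullet> (h *\<^sub>R v))) (at \<tau>)"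
      using has_derivative_compose[OF l grad] .
    then have "((\<lambda>\<tau>. f (x + \<tau> *\<^sub>R v)) has_real_derivative (g (x + \<tau> *\<^sub>R v) \<bullet> v)) (at \<tau>)"
      unfolding has_field_derivative_def by (rule has_derivative_eq_rhs) (auto simp: fun_eq_iff)
    then show ?thesis unfolding \<phi>_def
      by (auto intro!: derivative_eq_intros)
  qed
  have "\<phi> 1 \<le> \<phi> 0"
  proof (rule DERIV_nonpos_imp_decreasing_open[of 0 1])
    show "continuous_on {0..1} \<phi>"
      using der by (meson DERIV_isCont continuous_at_imp_continuous_on)
    fix \<tau> :: real assume t0: "0 < \<tau>" and t1: "\<tau> < 1"
    have tb: "\<tau> *\<^sub>R v \<in> blkspace B i" by (rule blkspace_scale[OF v])
    have "g (x + \<tau> *\<^sub>R v) \<bullet> v - g x \<bullet> v = (blk B i (g (x + \<tau> *\<^sub>R v)) - blk B i (g x)) \<bullet> v"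
      using blk_inner[OF v] by (simp add: inner_diff_left)
    also have "\<dots> \<le> dual_norm B i nm (blk B i (g (x + \<tau> *\<^sub>R v)) - blk B i (g x)) * nm v"
      by (rule dual_bound[OF bn v])
    also have "\<dots> \<le> (L * nm (\<tau> *\<^sub>R v)) * nm v"
      by (intro mult_right_mono lip tb nm_nonneg[OF bn v])
    also have "\<dots> = L * \<tau> * (nm v)\<^sup>2"
      using nm_scale[OF bn v, of \<tau>] t0 by (simp add: power2_eq_square)
    finally show "\<exists>y. (\<phi> has_real_derivative y) (at \<tau>) \<and> y \<le> 0"
      using der by (intro exI[of _ "g (x + \<tau> *\<^sub>R v) \<bullet> v - g x \<bullet> v - L * \<tau> * (nm v)\<^sup>2"]) auto
  qed simp
  then show ?thesis unfolding \<phi>_def by simp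
qed



lemma step_bound:
  fixes B :: "'m \<Rightarrow> 'n::finite set" and f :: "real^'n \<Rightarrow> real"
  assumes bn: "is_block_norm B i nm"
    and grad: "\<And>x. (f has_derivative (\<lambda>h. g x \<bullet> h)) (at x)"
    and Lp: "L > 0"
    and lip: "\<And>x t. t \<in> blkspace B i \<Longrightarrow> dual_norm B i nm (blk B i (g (x + t)) - blk B i (g x)) \<le> L * nm t"
    and sh: "is_sharp B i nm (blk B i (g x)) t"
    and u: "u \<in> blkspace B i"
  shows "f (x - (1 / L) *\<^sub>R t) \<le> f x - blk B i (g x) \<bullet> u + L / 2 * (nm u)\<^sup>2"
proof -
  define s where "s = blk B i (g x)"
  have tb: "t \<in> blkspace B i" and opt: "\<And>w. w \<in> blkspace B i \<Longrightarrow> - (s \<bullet> t) + 1/2 * (nm t)\<^sup>2 \<le> - (s \<bullet> w) + 1/2 * (nm w)\<^sup>2"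
    using sh unfolding is_sharp_def s_def by auto
  define v where "v = (- (1 / L)) *\<^sub>R t"
  have vb: "v \<in> blkspace B i" unfolding v_def by (rule blkspace_scale[OF tb])
  have "f (x - (1 / L) *\<^sub>R t) = f (x + v)" by (simp add: v_def)
  also have "\<dots> \<le> f x + g x \<bullet> v + L / 2 * (nm v)\<^sup>2"
    by (rule descent[OF bn grad Lp lip vb])
  also have "g x \<bullet> v = - (1 / L) * (s \<bullet> t)"
    using blk_inner[OF tb, of "g x"] by (simp add: v_def s_def)
  also have "nm v = (1 / L) * nm t" using nm_scale[OF bn tb, of "- (1 / L)"] Lp by (simp add: v_def)
  also have "f x + - (1 / L) * (s \<bullet> t) + L / 2 * ((1 / L) * nm t)\<^sup>2 = f x + (1 / L) * (- (s \<bullet> t) + 1/2 * (nm t)\<^sup>2)"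
    using Lp by (simp add: power2_eq_square field_simps)
  finally have 1: "f (x - (1 / L) *\<^sub>R t) \<le> f x + (1 / L) * (- (s \<bullet> t) + 1/2 * (nm t)\<^sup>2)" .
  have Lu: "L *\<^sub>R u \<in> blkspace B i" by (rule blkspace_scale[OF u])
  have "- (s \<bullet> t) + 1/2 * (nm t)\<^sup>2 \<le> - (s \<bullet> (L *\<^sub>R u)) + 1/2 * (nm (L *\<^sub>R u))\<^sup>2"
    by (rule opt[OF Lu])
  also have "\<dots> = L * (- (s \<bullet> u) + L / 2 * (nm u)\<^sup>2)"
    using nm_scale[OF bn u, of L] Lp by (simp add: power2_eq_square field_simps)
  finally have 2: "(1 / L) * (- (s \<bullet> t) + 1/2 * (nm t)\<^sup>2) \<le> - (s \<bullet> u) + L / 2 * (nm u)\<^sup>2"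
    using Lp by (simp add: field_simps)
  from 1 2 show ?thesis by (simp add: s_def)
qed




lemma LP_norm_sq:
  assumes norms: "\<And>i. is_block_norm B i (nm i)" and Lpos: "\<And>i. L i > 0" and ppos: "\<And>i. pmf p i > 0"
  shows "(LP_norm B nm L p v)\<^sup>2 = (\<Sum>i\<in>UNIV. L i / pmf p i * (nm i (blk B i v))\<^sup>2)"
proof -
  have "0 \<le> (\<Sum>i\<in>UNIV. L i / pmf p i * (nm i (blk B i v))\<^sup>2)"
    using Lpos ppos by (intro sum_nonneg mult_nonneg_nonneg) (auto intro: less_imp_le)
  then show ?thesis unfolding LP_norm_def by simp
qed

lemma exp_step:
  fixes B :: "'m::finite \<Rightarrow> 'n::finite set" and f :: "real^'n \<Rightarrow> real"
  assumes part: "is_block_partition B"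
    and norms: "\<And>i. is_block_norm B i (nm i)"
    and grad: "\<And>x. (f has_derivative (\<lambda>h. g x \<bullet> h)) (at x)"
    and Lpos: "\<And>i. L i > 0"
    and lip: "\<And>x t i. t \<in> blkspace B i \<Longrightarrow>
               dual_norm B i (nm i) (blk B i (g (x + t)) - blk B i (g x)) \<le> L i * nm i t"
    and ppos: "\<And>i. pmf p i > 0"
    and sharp: "\<And>i s. s \<in> blkspace B i \<Longrightarrow> is_sharp B i (nm i) s (sh i s)"
    and strconv: "\<And>x y. f x \<ge> f y + g y \<bullet> (x - y) + \<mu> / 2 * (LP_norm B nm L p (x - y))\<^sup>2"
    and mupos: "\<mu> > 0"
    and opt: "\<And>y. f xopt \<le> f y"
  shows "(\<Sum>i\<in>UNIV. pmf p i * f (rcds_step B L sh g i x)) \<le> f x + \<mu> * (f xopt - f x)"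
proof -
  define d where "d = xopt - x"
  define w where "w = \<mu> *\<^sub>R d"
  define Q where "Q v = (\<Sum>i\<in>UNIV. L i / pmf p i * (nm i (blk B i v))\<^sup>2)" for v
  have each: "pmf p i * f (rcds_step B L sh g i x)
      \<le> pmf p i * f x + g x \<bullet> blk B i w + L i / pmf p i * (nm i (blk B i w))\<^sup>2 / 2" for i
  proof -
    define u where "u = (- (1 / pmf p i)) *\<^sub>R blk B i w"
    have ub: "u \<in> blkspace B i" unfolding u_def by (intro blkspace_scale blk_in)
    have pi: "pmf p i > 0" by (rule ppos)
    have "f (rcds_step B L sh g i x) \<le> f x - blk B i (g x) \<bullet> u + L i / 2 * (nm i u)\<^sup>2"
      unfolding rcds_step_def
      by (rule step_bound[OF norms grad Lpos lip sharp[OF blk_in] ub])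
    also have "blk B i (g x) \<bullet> u = - (1 / pmf p i) * (g x \<bullet> blk B i w)"
      using blk_inner[OF ub, of "g x"] by (simp add: u_def)
    also have "nm i u = (1 / pmf p i) * nm i (blk B i w)"
      using nm_scale[OF norms blk_in, where c="- (1 / pmf p i)"] pi by (simp add: u_def)
    finally have "f (rcds_step B L sh g i x) \<le> f x + (1 / pmf p i) * (g x \<bullet> blk B i w) + L i / 2 * ((1 / pmf p i) * nm i (blk B i w))\<^sup>2"
      by simp
    then have "pmf p i * f (rcds_step B L sh g i x) \<le> pmf p i * (f x + (1 / pmf p i) * (g x \<bullet> blk B i w) + L i / 2 * ((1 / pmf p i) * nm i (blk B i w))\<^sup>2)"
      using pi by (intro mult_left_mono) auto
    also have "\<dots> = pmf p i * f x + g x \<bullet> blk B i w + L i / pmf p i * (nm i (blk B i w))\<^sup>2 / 2"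
      using pi by (simp add: power2_eq_square field_simps)
    finally show ?thesis .
  qed
  have "(\<Sum>i\<in>UNIV. pmf p i * f (rcds_step B L sh g i x))
     \<le> (\<Sum>i\<in>UNIV. pmf p i * f x + g x \<bullet> blk B i w + L i / pmf p i * (nm i (blk B i w))\<^sup>2 / 2)"
    by (intro sum_mono each)
  also have "\<dots> = (\<Sum>i\<in>UNIV. pmf p i) * f x + g x \<bullet> (\<Sum>i\<in>UNIV. blk B i w) + Q w / 2"
    by (simp add: sum.distrib sum_distrib_right inner_sum_right Q_def sum_divide_distrib)
  also have "(\<Sum>i\<in>UNIV. pmf p i) = 1" by (rule sum_pmf_eq_1) auto
  also have "(\<Sum>i\<in>UNIV. blk B i w) = w" by (rule sum_blk[OF part])
  also have "Q w = \<mu>\<^sup>2 * Q d"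
  proof -
    have "Q w = (\<Sum>i\<in>UNIV. \<mu>\<^sup>2 * (L i / pmf p i * (nm i (blk B i d))\<^sup>2))"
      unfolding Q_def w_def blk_scale
      by (intro sum.cong refl) (simp add: nm_scale[OF norms blk_in] power_mult_distrib)
    then show ?thesis by (simp add: Q_def sum_distrib_left)
  qed
  also have "1 * f x + g x \<bullet> w + \<mu>\<^sup>2 * Q d / 2 = f x + \<mu> * (g x \<bullet> d + \<mu> / 2 * Q d)"
    by (simp add: w_def power2_eq_square field_simps)
  also have "\<mu> * (g x \<bullet> d + \<mu> / 2 * Q d) \<le> \<mu> * (f xopt - f x)"
  proof -
    have "f xopt \<ge> f x + g x \<bullet> d + \<mu> / 2 * Q d"
      using strconv[where x=xopt and y=x] LP_norm_sq[where B=B and nm=nm and L=L and p=p and v=d, OF norms Lpos ppos] by (simp add: d_def Q_def)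
    then show ?thesis using mupos by (intro mult_left_mono) auto
  qed
  finally show ?thesis by simp
qed


lemma integral_bind_fin:
  fixes h :: "'b \<Rightarrow> real"
  assumes fM: "finite (set_pmf M)" and fN: "\<And>x. x \<in> set_pmf M \<Longrightarrow> finite (set_pmf (N x))"
  shows "measure_pmf.expectation (bind_pmf M N) h = measure_pmf.expectation M (\<lambda>x. measure_pmf.expectation (N x) h)"
proof -
  define S where "S = (\<Union>x\<in>set_pmf M. set_pmf (N x))"
  have fS: "finite S" unfolding S_def using fM fN by auto
  have "measure_pmf.expectation (bind_pmf M N) h = (\<Sum>y\<in>S. h y * pmf (bind_pmf M N) y)"
    by (rule integral_measure_pmf_real[OF fS]) (auto simp: S_def)
  also have "\<dots> = (\<Sum>y\<in>S. \<Sum>x\<in>set_pmf M. h y * pmf (N x) y * pmf M x)"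
  proof (intro sum.cong refl)
    fix y
    have "pmf (bind_pmf M N) y = (\<Sum>x\<in>set_pmf M. pmf (N x) y * pmf M x)"
      unfolding pmf_bind by (rule integral_measure_pmf_real[OF fM]) auto
    then show "h y * pmf (bind_pmf M N) y = (\<Sum>x\<in>set_pmf M. h y * pmf (N x) y * pmf M x)"
      by (simp add: sum_distrib_left mult.assoc)
  qed
  also have "\<dots> = (\<Sum>x\<in>set_pmf M. \<Sum>y\<in>S. h y * pmf (N x) y * pmf M x)"
    by (rule sum.swap)
  also have "\<dots> = (\<Sum>x\<in>set_pmf M. measure_pmf.expectation (N x) h * pmf M x)"
  proof (intro sum.cong refl)
    fix x assume x: "x \<in> set_pmf M"
    have "measure_pmf.expectation (N x) h = (\<Sum>y\<in>S. h y * pmf (N x) y)"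
      by (rule integral_measure_pmf_real[OF fS]) (use x in \<open>auto simp: S_def\<close>)
    then show "(\<Sum>y\<in>S. h y * pmf (N x) y * pmf M x) = measure_pmf.expectation (N x) h * pmf M x"
      by (simp add: sum_distrib_right)
  qed
  also have "\<dots> = measure_pmf.expectation M (\<lambda>x. measure_pmf.expectation (N x) h)"
    by (rule integral_measure_pmf_real[OF fM, symmetric]) auto
  finally show ?thesis .
qed

lemma finite_rcds:
  fixes B :: "'m::finite \<Rightarrow> 'n::finite set"
  shows "finite (set_pmf (rcds B L sh g p x0 k))"
  by (induction k) auto



theorem theorem12:
  fixes B :: "'m::finite \<Rightarrow> 'n::finite set"
    and nm :: "'m \<Rightarrow> real^'n \<Rightarrow> real"
    and f :: "real^'n \<Rightarrow> real"
    and g :: "real^'n \<Rightarrow> real^'n"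
    and L :: "'m \<Rightarrow> real"
    and p :: "'m pmf"
    and sh :: "'m \<Rightarrow> real^'n \<Rightarrow> real^'n"
    and xopt x0 :: "real^'n"
    and \<mu> \<epsilon> \<rho> :: real
    and k :: nat
  assumes part: "is_block_partition B"
    and norms: "\<And>i. is_block_norm B i (nm i)"
    and conv: "convex_on UNIV f"
    and grad: "\<And>x. (f has_derivative (\<lambda>h. g x \<bullet> h)) (at x)"
    and Lpos: "\<And>i. L i > 0"
    and lip: "\<And>x t i. t \<in> blkspace B i \<Longrightarrow>
               dual_norm B i (nm i) (blk B i (g (x + t)) - blk B i (g x)) \<le> L i * nm i t"
    and opt: "\<And>y. f xopt \<le> f y"
    and ppos: "\<And>i. pmf p i > 0"
    and sharp: "\<And>i s. s \<in> blkspace B i \<Longrightarrow> is_sharp B i (nm i) s (sh i s)"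
    and strconv: "\<And>x y. f x \<ge> f y + g y \<bullet> (x - y) + \<mu> / 2 * (LP_norm B nm L p (x - y))\<^sup>2"
    and mupos: "\<mu> > 0"
    and eps: "0 < \<epsilon>" "\<epsilon> < f x0 - f xopt"
    and rho: "0 < \<rho>" "\<rho> < 1"
    and kbound: "real k \<ge> 1 / \<mu> * ln ((f x0 - f xopt) / (\<epsilon> * \<rho>))"
  shows "measure_pmf.prob (rcds B L sh g p x0 k) {x. f x - f xopt \<le> \<epsilon>} \<ge> 1 - \<rho>"

proof -
  define M where "M k = rcds B L sh g p x0 k" for k
  define gap where "gap x = f x - f xopt" for x
  define r where "r k = measure_pmf.expectation (M k) gap" for k
  have fin: "finite (set_pmf (M k))" for k unfolding M_def by (rule finite_rcds)
  have r0: "r 0 = f x0 - f xopt" by (simp add: r_def M_def gap_def)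
  have rnn: "r k \<ge> 0" for k
    unfolding r_def by (rule Bochner_Integration.integral_nonneg) (use opt in \<open>auto simp: gap_def\<close>)
  have rstep: "r (Suc k) \<le> (1 - \<mu>) * r k" for k
  proof -
    have inner: "measure_pmf.expectation (map_pmf (\<lambda>i. rcds_step B L sh g i x) p) gap \<le> (1 - \<mu>) * gap x" for x
    proof -
      have "measure_pmf.expectation (map_pmf (\<lambda>i. rcds_step B L sh g i x) p) gap
          = (\<Sum>i\<in>UNIV. gap (rcds_step B L sh g i x) * pmf p i)"
        by (simp, rule integral_measure_pmf_real) auto
      also have "\<dots> = (\<Sum>i\<in>UNIV. pmf p i * f (rcds_step B L sh g i x)) - (\<Sum>i\<in>UNIV. pmf p i) * f xopt"
        by (simp add: gap_def algebra_simps sum_subtractf sum_distrib_right sum_distrib_left)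
      also have "(\<Sum>i\<in>UNIV. pmf p i) = 1" by (rule sum_pmf_eq_1) auto
      also have "(\<Sum>i\<in>UNIV. pmf p i * f (rcds_step B L sh g i x)) \<le> f x + \<mu> * (f xopt - f x)"
        by (rule exp_step[OF part norms grad Lpos lip ppos sharp strconv mupos opt])
      finally show ?thesis by (simp add: gap_def algebra_simps)
    qed
    have "r (Suc k) = measure_pmf.expectation (M k)
            (\<lambda>x. measure_pmf.expectation (map_pmf (\<lambda>i. rcds_step B L sh g i x) p) gap)"
      unfolding r_def M_def rcds.simps
      by (rule integral_bind_fin) (use finite_rcds in auto)
    also have "\<dots> \<le> measure_pmf.expectation (M k) (\<lambda>x. (1 - \<mu>) * gap x)"
      by (rule integral_mono) (auto intro: integrable_measure_pmf_finite fin inner[simplified])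
    also have "\<dots> = (1 - \<mu>) * r k" by (simp add: r_def)
    finally show ?thesis .
  qed
  have rbound: "r k \<le> exp (- \<mu> * real k) * r 0" for k
  proof (induction k)
    case 0 then show ?case by simp
  next
    case (Suc k)
    show ?case
    proof (cases "1 - \<mu> \<ge> 0")
      case True
      have "r (Suc k) \<le> (1 - \<mu>) * r k" by (rule rstep)
      also have "\<dots> \<le> (1 - \<mu>) * (exp (- \<mu> * real k) * r 0)"
        using Suc True by (intro mult_left_mono) auto
      also have "\<dots> \<le> exp (- \<mu>) * (exp (- \<mu> * real k) * r 0)"
        using exp_ge_add_one_self[of "- \<mu>"] rnn[of 0]
        by (intro mult_right_mono) auto
      also have "\<dots> = exp (- \<mu> * real (Suc k)) * r 0"
        by (simp add: exp_add[symmetric] algebra_simps)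
      finally show ?thesis .
    next
      case False
      have "r (Suc k) \<le> (1 - \<mu>) * r k" by (rule rstep)
      also have "\<dots> \<le> 0" using False rnn[of k] by (simp add: mult_nonpos_nonneg)
      also have "\<dots> \<le> exp (- \<mu> * real (Suc k)) * r 0" using rnn[of 0] by simp
      finally show ?thesis .
    qed
  qed
  have D0: "f x0 - f xopt > 0" using eps by simp
  have ek: "exp (- \<mu> * real k) \<le> \<epsilon> * \<rho> / (f x0 - f xopt)"
  proof -
    have "ln ((f x0 - f xopt) / (\<epsilon> * \<rho>)) \<le> \<mu> * real k"
      using kbound mupos by (simp add: field_simps)
    then have "exp (- \<mu> * real k) \<le> exp (- ln ((f x0 - f xopt) / (\<epsilon> * \<rho>)))" by simp
    also have "\<dots> = \<epsilon> * \<rho> / (f x0 - f xopt)"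
      using D0 eps rho by (simp add: exp_minus)
    finally show ?thesis .
  qed
  have markov: "measure_pmf.prob (M k) {x. gap x \<ge> \<epsilon>} \<le> r k / \<epsilon>"
  proof -
    have "AE x in measure_pmf (M k). 0 \<le> gap x" using opt by (simp add: gap_def)
    from integral_Markov_inequality_measure[OF integrable_measure_pmf_finite[OF fin] _ this, of UNIV \<epsilon>] eps
    show ?thesis by (simp add: r_def)
  qed
  have "r k / \<epsilon> \<le> exp (- \<mu> * real k) * (f x0 - f xopt) / \<epsilon>"
    using rbound[of k] r0 eps by (simp add: divide_right_mono)
  also have "\<dots> \<le> (\<epsilon> * \<rho> / (f x0 - f xopt)) * (f x0 - f xopt) / \<epsilon>"
    using ek D0 eps by (intro divide_right_mono mult_right_mono) auto
  also have "\<dots> = \<rho>" using D0 eps by simp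
  finally have pbad: "measure_pmf.prob (M k) {x. gap x \<ge> \<epsilon>} \<le> \<rho>" using markov by simp
  have "measure_pmf.prob (M k) (- {x. f x - f xopt \<le> \<epsilon>}) \<le> measure_pmf.prob (M k) {x. gap x \<ge> \<epsilon>}"
    by (rule measure_pmf.finite_measure_mono) (auto simp: gap_def)
  moreover have "measure_pmf.prob (M k) (- {x. f x - f xopt \<le> \<epsilon>}) = 1 - measure_pmf.prob (M k) {x. f x - f xopt \<le> \<epsilon>}"
    using measure_pmf.prob_compl[of "{x. f x - f xopt \<le> \<epsilon>}" "M k"] by (simp add: Compl_eq_Diff_UNIV)
  ultimately show ?thesis using pbad by (simp add: M_def)
qed


end
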